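(* Let $\mathcal{S}\subseteq\mathbb{R}^n$, $\mathcal{A}\subseteq\mathbb{R}^m$, let $f:\mathcal{S}\times\mathcal{A}\to\mathbb{R}^n$ satisfy $\|f(\xi,v)-f(\overline{\xi},\overline{v})\|\leqslant L_{f\xi}\|\xi-\overline{\xi}\|+L_{fv}\|v-\overline{v}\|$ for all $\xi,\overline{\xi}\in\mathcal{S}$, $v,\overline{v}\in\mathcal{A}$, and let $g:\mathcal{S}\times\mathcal{A}\to\mathbb{R}$. Let $\Sigma=(\mathcal{S},\mathcal{A},F,g,g)$ be the transition system with $\mathcal{A}(\xi)=\{v\in\mathcal{A}: f(\xi,v)\in\mathcal{S}\}$ and $F(\xi,v)=\{f(\xi,v)\}$ for $v\in\mathcal{A}(\xi)$, and let $\Sigma_{\mathrm{D}}=(\mathcal{S}_{\mathrm{D}},\mathcal{A}_{\mathrm{D}},\Delta,\overline{g},\underline{g})$ be the symbolic model with parameters $\eta,\mu>0$ described in the context. Then the relation $\mathcal{R}$ consisting of all pairs $(s,\xi)\in\mathcal{S}_{\mathrm{D}}\times\mathcal{S}$ with $\xi\in s$ is an alternating simulation relation from $\Sigma_{\mathrm{D}}$ to $\Sigma$, i.e. (1) for every $s\in\mathcal{S}_{\mathrm{D}}$ there is $\xi\in\mathcal{S}$ with $(s,\xi)\in\mathcal{R}$; and (2) for every $(s,\xi)\in\mathcal{R}$ and every $a\in\mathcal{A}_{\mathrm{D}}(s)$ there exists $v\in\mathcal{A}(\xi)$ such that for every $\xi'\in F(\xi,v)$ there exists $s'\in\Delta(s,a)$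 with $(s',\xi')\in\mathcal{R}$.
   Context: $\|\cdot\|$ is the infinity norm and $\mathbb{B}=\{x:\|x\|_\infty\le 1\}$. Symbolic model $\Sigma_{\mathrm{D}}$ with quantization parameters $\eta,\mu>0$: $\mathcal{S}_{\mathrm{D}}$ is a finite partition of $\mathcal{S}$ (ignoring measure-zero overlaps) into hyperrectangular cells $s$ with center $s_c$ and $\|\xi-\overline{\xi}\|\le\eta$ for all $\xi,\overline{\xi}\in s$; $\mathcal{A}_{\mathrm{D}}$ is a finite partition of $\mathcal{A}$ into hyperrectangular cells $a$ with center $a_c$ and $\|v-\overline{v}\|\le\mu$ for all $v,\overline{v}\in a$. Transition relation: $s'\in\Delta(s,a)$ iff $s'\cap\big(f(s_c,a_c)+(L_{f\xi}\eta+L_{fv}\mu)\mathbb{B}\big)\neq\emptyset$. Enabled inputs: $a\in\mathcal{A}_{\mathrm{D}}(s)$ iff $f(s_c,a_c)+(L_{f\xi}\eta+L_{fv}\mu)\mathbb{B}$ is contained in $\mathcal{S}$ (the union of the cells). Rewards: $\overline{g}(s,a)=\max_{\xi\in s}\max_{v\in a}g(\xi,v)$, $\underline{g}(s,a)=\min_{\xi\in s}\min_{v\in a}g(\xi,v)$. *)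

theory Defs
  imports "HOL-Analysis.Analysis"
begin

definition inorm :: "real^'n \<Rightarrow> real" where
  "inorm x = Max (range (\<lambda>i. \<bar>x $ i\<bar>))"

definition inf_ball :: "real^'n \<Rightarrow> real \<Rightarrow> (real^'n) set" where
  "inf_ball c r = {c + r *\<^sub>R x | x. inorm x \<le> 1}"

definition hyperrect :: "(real^'n) set \<Rightarrow> bool" where
  "hyperrect s \<longleftrightarrow> (\<exists>lo hi. (\<forall>i. lo $ i \<le> hi $ i) \<and> s = cbox lo hi)"

definition cell_center :: "(real^'n) set \<Rightarrow> real^'n" where
  "cell_center s = (SOME c. \<exists>lo hi. (\<forall>i. lo $ i \<le> hi $ i) \<and> s = cbox lo hi
                              \<and> c = (1/2) *\<^sub>R (lo + hi))"

definition cell_partition :: "(real^'n) set \<Rightarrow> (real^'n) set set \<Rightarrow> real \<Rightarrow> bool" where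
  "cell_partition X P eps \<longleftrightarrow>
     finite P \<and> \<Union>P = X \<and> (\<forall>s\<in>P. hyperrect s) \<and>
     (\<forall>s\<in>P. \<forall>t\<in>P. s \<noteq> t \<longrightarrow> interior s \<inter> interior t = {}) \<and>
     (\<forall>s\<in>P. \<forall>x\<in>s. \<forall>y\<in>s. inorm (x - y) \<le> eps)"

definition conc_enabled ::
  "(real^'n) set \<Rightarrow> (real^'m) set \<Rightarrow> (real^'n \<Rightarrow> real^'m \<Rightarrow> real^'n) \<Rightarrow> real^'n \<Rightarrow> (real^'m) set" where
  "conc_enabled S A f \<xi> = {v \<in> A. f \<xi> v \<in> S}"

definition conc_post :: "(real^'n \<Rightarrow> real^'m \<Rightarrow> real^'n) \<Rightarrow> real^'n \<Rightarrow> real^'m \<Rightarrow> (real^'n) set" where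
  "conc_post f \<xi> v = {f \<xi> v}"

definition symb_post ::
  "(real^'n) set set \<Rightarrow> (real^'n \<Rightarrow> real^'m \<Rightarrow> real^'n) \<Rightarrow> real \<Rightarrow> real \<Rightarrow> real \<Rightarrow> real
   \<Rightarrow> (real^'n) set \<Rightarrow> (real^'m) set \<Rightarrow> (real^'n) set set" where
  "symb_post SD f Lx Lv \<eta> \<mu> s a =
     {s' \<in> SD. s' \<inter> inf_ball (f (cell_center s) (cell_center a)) (Lx * \<eta> + Lv * \<mu>) \<noteq> {}}"

definition symb_enabled ::
  "(real^'n) set set \<Rightarrow> (real^'m) set set \<Rightarrow> (real^'n \<Rightarrow> real^'m \<Rightarrow> real^'n) \<Rightarrow> real \<Rightarrow> real \<Rightarrow> real \<Rightarrow> real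
   \<Rightarrow> (real^'n) set \<Rightarrow> (real^'m) set set" where
  "symb_enabled SD AD f Lx Lv \<eta> \<mu> s =
     {a \<in> AD. inf_ball (f (cell_center s) (cell_center a)) (Lx * \<eta> + Lv * \<mu>) \<subseteq> \<Union>SD}"

text \<open>Rewards of the symbolic model (not used by the simulation statement).\<close>
definition g_upper where
  "g_upper (g :: real^'n \<Rightarrow> real^'m \<Rightarrow> real) s a = (SUP \<xi>\<in>s. SUP v\<in>a. g \<xi> v)"
definition g_lower where
  "g_lower (g :: real^'n \<Rightarrow> real^'m \<Rightarrow> real) s a = (INF \<xi>\<in>s. INF v\<in>a. g \<xi> v)"

end

theory Submission
  imports Defs
begin

lemma inorm_le: "inorm (x::real^'n) \<le> r \<longleftrightarrow> (\<forall>i. \<bar>x$i\<bar> \<le> r)"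
  unfolding inorm_def by (subst Max_le_iff) auto

lemma center_in: assumes "hyperrect s" shows "cell_center s \<in> s"
proof -
  obtain lo hi where h: "\<forall>i. lo $ i \<le> hi $ i" "s = cbox lo hi" using assms hyperrect_def by blast
  have "\<exists>c. \<exists>lo hi. (\<forall>i. lo $ i \<le> hi $ i) \<and> s = cbox lo hi \<and> c = (1/2) *\<^sub>R (lo + hi)"
    using h by blast
  from someI_ex[OF this] obtain lo' hi' where h': "\<forall>i. lo' $ i \<le> hi' $ i" "s = cbox lo' hi'"
     "cell_center s = (1/2) *\<^sub>R (lo' + hi')" unfolding cell_center_def by blast
  show ?thesis unfolding h'(3) unfolding h'(2) mem_box_cart using h'(1) by (auto simp: field_simps)
qed

lemma in_inf_ball: assumes "inorm (y - c) \<le> r" "0 \<le> r" shows "y \<in> inf_ball c r"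
proof (cases "r = 0")
  case True
  then have "y - c = 0" using assms(1) unfolding inorm_le by (simp add: vec_eq_iff)
  then show ?thesis unfolding inf_ball_def using True by (auto intro!: exI[of _ 0] simp: inorm_le)
next
  case False
  then have rp: "r > 0" using assms(2) by simp
  have "inorm ((1/r) *\<^sub>R (y - c)) \<le> 1"
    using assms(1) rp unfolding inorm_le by (auto simp: abs_mult divide_simps)
  moreover have "y = c + r *\<^sub>R ((1/r) *\<^sub>R (y - c))" using rp by simp
  ultimately show ?thesis unfolding inf_ball_def by blast
qed

lemma inorm_zero: "inorm (0::real^'n) = 0"
  unfolding inorm_def by simp

lemma hyper_ne: "hyperrect s \<Longrightarrow> s \<noteq> {}"
  using center_in by blast

theorem proposition1:
  fixes S :: "(real^'n) set" and A :: "(real^'m) set"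
    and f :: "real^'n \<Rightarrow> real^'m \<Rightarrow> real^'n"
    and Lx Lv \<eta> \<mu> :: real
    and SD :: "(real^'n) set set" and AD :: "(real^'m) set set"
  assumes lip: "\<forall>\<xi>\<in>S. \<forall>\<xi>b\<in>S. \<forall>v\<in>A. \<forall>vb\<in>A.
                  inorm (f \<xi> v - f \<xi>b vb) \<le> Lx * inorm (\<xi> - \<xi>b) + Lv * inorm (v - vb)"
    and Lx_nonneg: "0 \<le> Lx" and Lv_nonneg: "0 \<le> Lv"
    and eta_pos: "0 < \<eta>" and mu_pos: "0 < \<mu>"
    and SD_part: "cell_partition S SD \<eta>"
    and AD_part: "cell_partition A AD \<mu>"
  shows "(\<forall>s\<in>SD. \<exists>\<xi>\<in>S. \<xi> \<in> s) \<and>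
         (\<forall>s\<in>SD. \<forall>\<xi>\<in>S. \<xi> \<in> s \<longrightarrow>
            (\<forall>a\<in>symb_enabled SD AD f Lx Lv \<eta> \<mu> s.
               \<exists>v\<in>conc_enabled S A f \<xi>. \<forall>\<xi>'\<in>conc_post f \<xi> v.
                  \<exists>s'\<in>symb_post SD f Lx Lv \<eta> \<mu> s a. \<xi>' \<in> s'))"
proof -
  have P1: "\<Union>SD = S" and P2: "\<forall>s\<in>SD. hyperrect s" and P3: "\<forall>s\<in>SD. \<forall>x\<in>s. \<forall>y\<in>s. inorm (x - y) \<le> \<eta>"
    using SD_part unfolding cell_partition_def by auto
  have Q1: "\<Union>AD = A" and Q2: "\<forall>s\<in>AD. hyperrect s"
    using AD_part unfolding cell_partition_def by auto
  show ?thesis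
  proof (intro conjI ballI impI)
  fix s assume "s \<in> SD"
  then show "\<exists>\<xi>\<in>S. \<xi> \<in> s" using P1 P2 hyper_ne by blast
next
  fix s \<xi> a assume s: "s \<in> SD" and xi: "\<xi> \<in> S" "\<xi> \<in> s"
    and a: "a \<in> symb_enabled SD AD f Lx Lv \<eta> \<mu> s"
  have aAD: "a \<in> AD" and sub: "inf_ball (f (cell_center s) (cell_center a)) (Lx * \<eta> + Lv * \<mu>) \<subseteq> S"
    using a P1 unfolding symb_enabled_def by auto
  have sc: "cell_center s \<in> s" using s P2 center_in by blast
  have ac: "cell_center a \<in> a" using aAD Q2 center_in by blast
  have scS: "cell_center s \<in> S" using sc s P1 by blast
  have acA: "cell_center a \<in> A" using ac aAD Q1 by blast
  have d: "inorm (\<xi> - cell_center s) \<le> \<eta>" using P3 s xi(2) sc by blast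
  have "inorm (f \<xi> (cell_center a) - f (cell_center s) (cell_center a))
        \<le> Lx * inorm (\<xi> - cell_center s) + Lv * inorm (cell_center a - cell_center a)"
    using lip xi(1) scS acA by (elim ballE) auto
  also have "\<dots> \<le> Lx * \<eta> + Lv * \<mu>"
    using mult_left_mono[OF d Lx_nonneg] mult_nonneg_nonneg[OF Lv_nonneg less_imp_le[OF mu_pos]] by (simp add: inorm_zero)
  finally have inb: "f \<xi> (cell_center a) \<in> inf_ball (f (cell_center s) (cell_center a)) (Lx * \<eta> + Lv * \<mu>)"
    by (intro in_inf_ball) (use Lx_nonneg Lv_nonneg eta_pos mu_pos in auto)
  then have fS: "f \<xi> (cell_center a) \<in> S" using sub by blast
  then obtain s' where s': "s' \<in> SD" "f \<xi> (cell_center a) \<in> s'" using P1 by blast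
  show "\<exists>v\<in>conc_enabled S A f \<xi>. \<forall>\<xi>'\<in>conc_post f \<xi> v.
                  \<exists>s'\<in>symb_post SD f Lx Lv \<eta> \<mu> s a. \<xi>' \<in> s'"
  proof (intro bexI[of _ "cell_center a"] ballI)
    show "cell_center a \<in> conc_enabled S A f \<xi>" using acA fS unfolding conc_enabled_def by blast
    fix \<xi>' assume "\<xi>' \<in> conc_post f \<xi> (cell_center a)"
    then have "\<xi>' = f \<xi> (cell_center a)" unfolding conc_post_def by simp
    then show "\<exists>s'\<in>symb_post SD f Lx Lv \<eta> \<mu> s a. \<xi>' \<in> s'"
      using s' inb unfolding symb_post_def by blast
  qed
  qed
qed

end
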